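(* Let $\pi$ be a coupling of $\alpha$ and $\beta$ with density $p=\frac{d\pi}{d(\alpha\otimes\beta)}$ satisfying $\|p\|_\infty\le b$, and let $(x_i,y_i)_{i=1}^n$ be i.i.d. from a coupling $\hat\pi$ of $\alpha$ and $\beta$. Then $$\mathbb E\Big[\frac1n\sum_{j=1}^n\Big(1-\frac1n\sum_{i=1}^np(x_i,y_j)\Big)^2\Big]\le\frac{(b+1)^2}{n},$$ and for every $t>0$, with probability at least $1-\exp(-t^2/(4b^2))$, $$\frac1n\sum_{j=1}^n\Big(1-\frac1n\sum_{i=1}^np(x_i,y_j)\Big)^2\le\frac{(t+b+1)^2}{n}.$$
   Context: $\alpha,\beta$ are probability measures on measurable spaces $\mathcal X,\mathcal Y$; a coupling of $\alpha,\beta$ is a probability measure on $\mathcal X\times\mathcal Y$ with marginals $\alpha$ and $\beta$. *)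

theory Defs
  imports "HOL-Probability.Probability"
begin

definition coupling :: "'a measure \<Rightarrow> 'b measure \<Rightarrow> ('a \<times> 'b) measure \<Rightarrow> bool" where
  "coupling \<alpha> \<beta> \<pi> \<longleftrightarrow> prob_space \<pi> \<and> sets \<pi> = sets (\<alpha> \<Otimes>\<^sub>M \<beta>)
     \<and> distr \<pi> \<alpha> fst = \<alpha> \<and> distr \<pi> \<beta> snd = \<beta>"

definition marg_stat :: "('a \<Rightarrow> 'b \<Rightarrow> real) \<Rightarrow> nat \<Rightarrow> (nat \<Rightarrow> 'a \<times> 'b) \<Rightarrow> real" where
  "marg_stat p n \<omega> = (1 / real n) * (\<Sum>j<n. (1 - (1 / real n) * (\<Sum>i<n. p (fst (\<omega> i)) (snd (\<omega> j))))\<^sup>2)"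

end

theory Submission
  imports Defs
begin
lemma fact_double_ge: "2 ^ k * fact k \<le> (fact (2 * k) :: real)"
proof (induction k)
  case 0 then show ?case by simp
next
  case (Suc k)
  have "fact (2 * Suc k) = (real (2*k+2) * real (2*k+1)) * (fact (2*k) :: real)"
    by (simp add: fact_Suc algebra_simps)
  moreover have "(2::real) ^ Suc k * fact (Suc k) = (2 * real (k+1)) * (2 ^ k * fact k)"
    by (simp add: fact_Suc algebra_simps)
  moreover have "2 * real (k+1) \<le> real (2*k+2) * real (2*k+1)" by simp
  ultimately show ?case using Suc
    by (metis mult_mono of_nat_0_le_iff zero_le_mult_iff fact_ge_zero zero_le_numeral zero_le_power)
qed

lemma cosh_even_sums: "(\<lambda>k. x ^ (2*k) / fact (2*k)) sums cosh (x::real)"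
proof -
  define f where "f = (\<lambda>n. if even n then x ^ n / fact n else (0::real))"
  have "(\<lambda>n. if even n then x ^ n /\<^sub>R fact n else 0) = f"
    by (auto simp: fun_eq_iff divide_inverse_commute f_def)
  then have c: "f sums cosh x" using cosh_converges[of x] by simp
  have sm: "strict_mono (\<lambda>k::nat. 2*k)" by (simp add: strict_mono_def)
  have z: "f n = 0" if "n \<notin> range (\<lambda>k::nat. 2*k)" for n
  proof -
    have "odd n" using that by (metis evenE rangeI)
    then show ?thesis by (simp add: f_def)
  qed
  have "(\<lambda>k. f (2*k)) sums cosh x"
    using sums_mono_reindex[of "\<lambda>k. 2*k" f "cosh x"] sm z c by blast
  then show ?thesis by (simp add: f_def)
qed

lemma exp_sums_real: "(\<lambda>k. y ^ k / fact k) sums exp (y::real)"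
proof -
  have "(\<lambda>n. (y::real) ^ n /\<^sub>R fact n) = (\<lambda>k. y ^ k / fact k)"
      by (auto simp: fun_eq_iff divide_inverse_commute)
  then show ?thesis using exp_converges[of y] by simp
qed

lemma cosh_le_exp_sq: "cosh (x::real) \<le> exp (x\<^sup>2 / 2)"
proof -
  have e: "(\<lambda>k. (x\<^sup>2/2) ^ k / fact k) sums exp (x\<^sup>2/2)" by (rule exp_sums_real)
  show ?thesis
  proof (rule sums_le[OF _ cosh_even_sums e])
    fix k
    have p1: "0 < (2::real) ^ k * fact k" by simp
    have x0: "0 \<le> x ^ (2*k)" by (simp add: zero_le_even_power)
    have "x ^ (2*k) / fact (2*k) \<le> x ^ (2*k) / (2 ^ k * fact k)"
      using divide_left_mono[OF fact_double_ge x0] p1 by simp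
    also have "\<dots> = (x\<^sup>2/2) ^ k / fact k"
    proof -
      have a: "x ^ (2*k) = (x\<^sup>2) ^ k" by (rule power_mult)
      have b: "(x\<^sup>2/2) ^ k = (x\<^sup>2) ^ k / 2 ^ k" by (rule power_divide)
      show ?thesis unfolding a b by simp
    qed
    finally show "x ^ (2*k) / fact (2*k) \<le> (x\<^sup>2/2) ^ k / fact k" .
  qed
qed

lemma convex_pow_nonneg: "convex_on {0::real..} (\<lambda>x. x ^ q)"
proof (cases "even q")
  case True then show ?thesis
    using convex_on_subset[OF convex_power_even[OF True]] by auto
next
  case False then show ?thesis using convex_power_odd by auto
qed

lemma cosh_jensen:
  fixes V :: "'j \<Rightarrow> real"
  assumes "finite J" "J \<noteq> {}"
  shows "cosh (\<theta> * sqrt ((\<Sum>j\<in>J. (V j)\<^sup>2) / card J)) \<le> (\<Sum>j\<in>J. cosh (\<theta> * V j)) / card J"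
proof -
  define N where "N = real (card J)"
  have N: "N > 0" using assms by (simp add: N_def card_gt_0_iff)
  define m where "m = (\<Sum>j\<in>J. (V j)\<^sup>2) / N"
  have m0: "m \<ge> 0" unfolding m_def using N by (auto intro!: sum_nonneg divide_nonneg_pos)
  note c = cosh_even_sums
  have s: "(\<lambda>k. (\<Sum>j\<in>J. (1/N) * ((\<theta> * V j) ^ (2*k) / fact (2*k)))) sums (\<Sum>j\<in>J. (1/N) * cosh (\<theta> * V j))"
    by (intro sums_sum sums_mult c)
  have "cosh (\<theta> * sqrt m) \<le> (\<Sum>j\<in>J. (1/N) * cosh (\<theta> * V j))"
  proof (rule sums_le[OF _ c s])
    fix k
    have jen: "m ^ k \<le> (\<Sum>j\<in>J. (1/N) * ((V j)\<^sup>2) ^ k)"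
    proof -
      have "(\<Sum>j\<in>J. (1/N) *\<^sub>R (V j)\<^sup>2) ^ k \<le> (\<Sum>j\<in>J. (1/N) * ((V j)\<^sup>2) ^ k)"
        using convex_on_sum[OF assms convex_pow_nonneg, of "\<lambda>_. 1/N" "\<lambda>j. (V j)\<^sup>2"] N
        by (simp add: N_def)
      moreover have "(\<Sum>j\<in>J. (1/N) *\<^sub>R (V j)\<^sup>2) = m"
        by (simp add: m_def sum_distrib_left divide_inverse mult.commute)
      ultimately show ?thesis by simp
    qed
    have "(\<theta> * sqrt m) ^ (2*k) / fact (2*k) = \<theta> ^ (2*k) * m ^ k / fact (2*k)"
      using m0 by (simp add: power_mult_distrib power_mult)
    also have "\<dots> \<le> \<theta> ^ (2*k) * (\<Sum>j\<in>J. (1/N) * ((V j)\<^sup>2) ^ k) / fact (2*k)"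
      by (intro divide_right_mono mult_left_mono jen) (auto simp: zero_le_even_power)
    also have "\<dots> = (\<Sum>j\<in>J. (1/N) * ((\<theta> * V j) ^ (2*k) / fact (2*k)))"
    proof -
      have "(1/N) * ((\<theta> * V j) ^ (2*k) / fact (2*k)) = \<theta> ^ (2*k) * ((1/N) * ((V j)\<^sup>2) ^ k) / fact (2*k)" for j
        by (simp only: power_mult_distrib power_mult) simp
      then have "(\<Sum>j\<in>J. (1/N) * ((\<theta> * V j) ^ (2*k) / fact (2*k))) = (\<Sum>j\<in>J. \<theta> ^ (2*k) * ((1/N) * ((V j)\<^sup>2) ^ k) / fact (2*k))"
        by (rule sum.cong[OF refl])
      also have "\<dots> = \<theta> ^ (2*k) * (\<Sum>j\<in>J. (1/N) * ((V j)\<^sup>2) ^ k) / fact (2*k)"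
        by (simp only: sum_divide_distrib[symmetric] sum_distrib_left[symmetric])
      finally show ?thesis by simp
    qed
    finally show "(\<theta> * sqrt m) ^ (2*k) / fact (2*k) \<le> (\<Sum>j\<in>J. (1/N) * ((\<theta> * V j) ^ (2*k) / fact (2*k)))" .
  qed
  also have "(\<Sum>j\<in>J. (1/N) * cosh (\<theta> * V j)) = (\<Sum>j\<in>J. cosh (\<theta> * V j)) / N"
    by (simp add: sum_divide_distrib)
  finally show ?thesis by (simp only: m_def N_def)
qed

locale msetup =
  fixes \<alpha> :: "'a measure" and \<beta> :: "'b measure" and \<pi> \<pi>' :: "('a \<times> 'b) measure"
    and p :: "'a \<Rightarrow> 'b \<Rightarrow> real" and b :: real and n :: nat
  assumes pa: "prob_space \<alpha>" and pb: "prob_space \<beta>"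
    and cpl: "coupling \<alpha> \<beta> \<pi>"
    and p_meas: "(\<lambda>z. p (fst z) (snd z)) \<in> borel_measurable (\<alpha> \<Otimes>\<^sub>M \<beta>)"
    and p_nonneg: "\<And>x y. 0 \<le> p x y"
    and p_bound: "\<And>x y. p x y \<le> b"
    and dens: "\<pi> = density (\<alpha> \<Otimes>\<^sub>M \<beta>) (\<lambda>z. ennreal (p (fst z) (snd z)))"
    and cpl': "coupling \<alpha> \<beta> \<pi>'"
    and npos: "n > 0"
begin

lemma pi'_prob: "prob_space \<pi>'" using cpl' by (simp add: coupling_def)
lemma sets_pi': "sets \<pi>' = sets (\<alpha> \<Otimes>\<^sub>M \<beta>)" using cpl' by (simp add: coupling_def)
lemma space_pi': "space \<pi>' = space \<alpha> \<times> space \<beta>"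
  using sets_eq_imp_space_eq[OF sets_pi'] by (simp add: space_pair_measure)
lemma distr_fst: "distr \<pi>' \<alpha> fst = \<alpha>" using cpl' by (simp add: coupling_def)
lemma distr_snd: "distr \<pi>' \<beta> snd = \<beta>" using cpl' by (simp add: coupling_def)
lemma fst_meas: "fst \<in> measurable \<pi>' \<alpha>"
  using measurable_fst measurable_cong_sets[OF sets_pi' refl] by blast
lemma snd_meas: "snd \<in> measurable \<pi>' \<beta>"
  using measurable_snd measurable_cong_sets[OF sets_pi' refl] by blast
lemma id_meas: "(\<lambda>z. z) \<in> measurable \<pi>' (\<alpha> \<Otimes>\<^sub>M \<beta>)"
  using measurable_ident_sets[OF sets_pi'] .

lemma p_meas_x: "y \<in> space \<beta> \<Longrightarrow> (\<lambda>x. p x y) \<in> borel_measurable \<alpha>"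
  using measurable_comp[OF measurable_Pair2'[of y \<beta> \<alpha>] p_meas] by (simp add: comp_def)

sublocale A: prob_space \<alpha> by (rule pa)
sublocale Bt: prob_space \<beta> by (rule pb)
sublocale AB: pair_sigma_finite \<alpha> \<beta>
  by (simp add: pair_sigma_finite_def A.sigma_finite_measure_axioms Bt.sigma_finite_measure_axioms)

definition g :: "'b \<Rightarrow> ennreal" where "g y = (\<integral>\<^sup>+x. ennreal (p x y) \<partial>\<alpha>)"

lemma g_meas: "g \<in> borel_measurable \<beta>"
proof -
  have "(\<lambda>(y, x). ennreal (p x y)) \<in> borel_measurable (\<beta> \<Otimes>\<^sub>M \<alpha>)"
  proof -
    have "(\<lambda>z. ennreal (p (fst z) (snd z))) \<in> borel_measurable (\<alpha> \<Otimes>\<^sub>M \<beta>)"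
      using p_meas by measurable
    from measurable_comp[OF measurable_pair_swap' this]
    show ?thesis by (simp add: comp_def case_prod_beta)
  qed
  from A.borel_measurable_nn_integral[OF this] show ?thesis
    unfolding g_def by simp
qed

lemma density_g: "density \<beta> g = \<beta>"
proof (rule measure_eqI)
  show "sets (density \<beta> g) = sets \<beta>" by simp
  fix A assume A: "A \<in> sets (density \<beta> g)"
  then have A': "A \<in> sets \<beta>" by simp
  have "emeasure (density \<beta> g) A = (\<integral>\<^sup>+y. g y * indicator A y \<partial>\<beta>)"
    using A' g_meas by (simp add: emeasure_density)
  also have "\<dots> = (\<integral>\<^sup>+y. (\<integral>\<^sup>+x. ennreal (p x y) * indicator A y \<partial>\<alpha>) \<partial>\<beta>)"
    unfolding g_def by (intro nn_integral_cong, subst nn_integral_multc) (auto intro!: measurable_compose[OF p_meas_x measurable_ennreal])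
  also have "\<dots> = (\<integral>\<^sup>+z. ennreal (p (fst z) (snd z)) * indicator (space \<alpha> \<times> A) z \<partial>(\<alpha> \<Otimes>\<^sub>M \<beta>))"
  proof -
    have m: "(\<lambda>z. ennreal (p (fst z) (snd z)) * indicator (space \<alpha> \<times> A) z) \<in> borel_measurable (\<alpha> \<Otimes>\<^sub>M \<beta>)"
      using p_meas A' by measurable
    show ?thesis
      unfolding AB.nn_integral_snd[OF m, symmetric]
      by (intro nn_integral_cong) (auto simp: indicator_def)
  qed
  also have "\<dots> = emeasure \<pi> (space \<alpha> \<times> A)"
    using A' p_meas by (simp add: dens emeasure_density)
  also have "\<dots> = emeasure (distr \<pi> \<beta> snd) A"
  proof -
    have sp: "space \<pi> = space \<alpha> \<times> space \<beta>" by (simp add: dens space_pair_measure)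
    have "snd -` A \<inter> space \<pi> = space \<alpha> \<times> A"
      using sets.sets_into_space[OF A'] sp by auto
    moreover have "snd \<in> measurable \<pi> \<beta>" by (simp add: dens)
    ultimately show ?thesis using A' by (simp add: emeasure_distr)
  qed
  also have "\<dots> = emeasure \<beta> A" using cpl by (simp add: coupling_def)
  finally show "emeasure (density \<beta> g) A = emeasure \<beta> A" .
qed

lemma AE_g: "AE y in \<beta>. g y = 1"
proof -
  have "density \<beta> g = density \<beta> (\<lambda>_. 1)" by (simp only: density_g density_1)
  from Bt.density_unique[OF g_meas _ this] show ?thesis by simp
qed

lemma b_nonneg: "0 \<le> b" using p_nonneg p_bound order_trans by blast

lemma b_ge_1: "b \<ge> 1"
proof -
  have ae: "AE y in \<beta>. y \<in> space \<beta> \<and> g y = 1" using AE_g AE_space by eventually_elim auto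
  have "\<exists>y. y \<in> space \<beta> \<and> g y = 1"
  proof (rule ccontr)
    assume "\<not> ?thesis"
    then have "AE y in \<beta>. False" using ae by (auto elim: eventually_mono)
    then show False by (simp add: Bt.AE_False)
  qed
  then obtain y where "y \<in> space \<beta>" "g y = 1" by blast
  moreover have "g y \<le> (\<integral>\<^sup>+x. ennreal b \<partial>\<alpha>)"
    unfolding g_def by (intro nn_integral_mono ennreal_leI) (simp add: p_bound)
  moreover have "(\<integral>\<^sup>+x. ennreal b \<partial>\<alpha>) = ennreal b" by (simp add: A.emeasure_space_1)
  ultimately have "ennreal 1 \<le> ennreal b" by simp
  then show ?thesis using b_nonneg by simp
qed

end

lemma hoeff_any:
  assumes M: "prob_space M" and fm: "f \<in> borel_measurable M"
    and ai: "AE x in M. f x \<in> {a..c}" and e0: "integral\<^sup>L M f = 0"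
  shows "(\<integral>\<^sup>+x. ennreal (exp (l * f x)) \<partial>M) \<le> ennreal (exp (l\<^sup>2 * (c - a)\<^sup>2 / 8))"
proof -
  interpret prob_space M by (rule M)
  consider "l > 0" | "l < 0" | "l = 0" by linarith
  then show ?thesis
  proof cases
    case 1
    interpret interval_bounded_random_variable M f a c
      by unfold_locales (use fm ai in auto)
    show ?thesis using Hoeffdings_lemma_nn_integral_0[OF 1 e0] .
  next
    case 2
    interpret interval_bounded_random_variable M "\<lambda>x. - f x" "-c" "-a"
      by unfold_locales (use fm ai in \<open>auto elim: eventually_mono\<close>)
    have e0': "expectation (\<lambda>x. - f x) = 0" using e0 by simp
    have "0 < -l" using 2 by simp
    from Hoeffdings_lemma_nn_integral_0[OF this e0']
    show ?thesis by (simp add: power2_eq_square algebra_simps)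
  next
    case 3
    then show ?thesis by (simp add: emeasure_space_1)
  qed
qed

context msetup begin

lemma hoeff_y:
  assumes y: "y \<in> space \<beta>" and gy: "g y = 1"
  shows "(\<integral>\<^sup>+x. ennreal (exp (l * (1 - p x y))) \<partial>\<alpha>) \<le> ennreal (exp (l\<^sup>2 * b\<^sup>2 / 8))"
proof -
  have m: "(\<lambda>x. p x y) \<in> borel_measurable \<alpha>" using p_meas_x[OF y] .
  have int1: "integral\<^sup>L \<alpha> (\<lambda>x. p x y) = 1"
    using gy m by (simp add: integral_eq_nn_integral p_nonneg g_def)
  have intp: "integrable \<alpha> (\<lambda>x. p x y)"
    by (rule A.integrable_const_bound[where B=b]) (use m p_nonneg p_bound in auto)
  have e0: "integral\<^sup>L \<alpha> (\<lambda>x. 1 - p x y) = 0"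
    using int1 intp by (simp add: Bochner_Integration.integral_diff A.prob_space)
  have "(\<integral>\<^sup>+x. ennreal (exp (l * (1 - p x y))) \<partial>\<alpha>) \<le> ennreal (exp (l\<^sup>2 * (1 - (1 - b))\<^sup>2 / 8))"
    by (rule hoeff_any[OF pa _ _ e0]) (use m p_nonneg p_bound in auto)
  then show ?thesis by simp
qed

lemma AE_good: "AE z in \<pi>'. snd z \<in> space \<beta> \<and> g (snd z) = 1"
proof -
  have "AE y in distr \<pi>' \<beta> snd. y \<in> space \<beta> \<and> g y = 1"
    unfolding distr_snd using AE_g AE_space by eventually_elim auto
  from AE_distrD[OF snd_meas this] show ?thesis .
qed

lemma hoeff_pi':
  assumes y: "snd z \<in> space \<beta>" "g (snd z) = 1"
  shows "(\<integral>\<^sup>+z'. ennreal (exp (l * (1 - p (fst z') (snd z)))) \<partial>\<pi>') \<le> ennreal (exp (l\<^sup>2 * b\<^sup>2 / 8))"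
proof -
  have m: "(\<lambda>x. ennreal (exp (l * (1 - p x (snd z))))) \<in> borel_measurable \<alpha>"
    using p_meas_x[OF y(1)] by measurable
  have "(\<integral>\<^sup>+z'. ennreal (exp (l * (1 - p (fst z') (snd z)))) \<partial>\<pi>')
      = (\<integral>\<^sup>+x. ennreal (exp (l * (1 - p x (snd z)))) \<partial>distr \<pi>' \<alpha> fst)"
    by (rule nn_integral_distr[symmetric, OF fst_meas]) (simp add: m)
  also have "\<dots> = (\<integral>\<^sup>+x. ennreal (exp (l * (1 - p x (snd z)))) \<partial>\<alpha>)" by (simp add: distr_fst)
  also have "\<dots> \<le> ennreal (exp (l\<^sup>2 * b\<^sup>2 / 8))" by (rule hoeff_y[OF y])
  finally show ?thesis .
qed

end

context msetup begin

abbreviation "MM \<equiv> PiM {..<n} (\<lambda>_. \<pi>')"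
definition w0 :: "'a \<times> 'b \<Rightarrow> real" where "w0 z = 1 - p (fst z) (snd z)"
definition V :: "(nat \<Rightarrow> 'a \<times> 'b) \<Rightarrow> nat \<Rightarrow> real" where
  "V \<omega> j = (\<Sum>i<n. (1 - p (fst (\<omega> i)) (snd (\<omega> j)))) / sqrt n"

sublocale P: product_sigma_finite "\<lambda>_. \<pi>'"
  unfolding product_sigma_finite_def using prob_space_imp_sigma_finite[OF pi'_prob] by simp

lemma pij_meas:
  assumes "i \<in> I" "j \<in> I"
  shows "(\<lambda>\<omega>. p (fst (\<omega> i)) (snd (\<omega> j))) \<in> borel_measurable (PiM I (\<lambda>_. \<pi>'))"
proof -
  have "(\<lambda>\<omega>. (fst (\<omega> i), snd (\<omega> j))) \<in> measurable (PiM I (\<lambda>_. \<pi>')) (\<alpha> \<Otimes>\<^sub>M \<beta>)"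
  proof (rule measurable_Pair)
    show "(\<lambda>\<omega>. fst (\<omega> i)) \<in> measurable (PiM I (\<lambda>_. \<pi>')) \<alpha>"
      using measurable_comp[OF measurable_component_singleton[OF assms(1)] fst_meas] by (simp add: comp_def)
    show "(\<lambda>\<omega>. snd (\<omega> j)) \<in> measurable (PiM I (\<lambda>_. \<pi>')) \<beta>"
      using measurable_comp[OF measurable_component_singleton[OF assms(2)] snd_meas] by (simp add: comp_def)
  qed
  from measurable_comp[OF this p_meas] show ?thesis by (simp add: comp_def)
qed

lemma V_meas: "j < n \<Longrightarrow> (\<lambda>\<omega>. V \<omega> j) \<in> borel_measurable MM"
  unfolding V_def
  by (intro borel_measurable_divide borel_measurable_sum borel_measurable_diff borel_measurable_const pij_meas) auto

lemma w0_meas: "w0 \<in> borel_measurable \<pi>'"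
proof -
  have "(\<lambda>z. p (fst z) (snd z)) \<in> borel_measurable \<pi>'"
    using measurable_comp[OF id_meas p_meas] by (simp add: comp_def)
  then show ?thesis unfolding w0_def by measurable
qed

lemma per_j:
  assumes j: "j < n"
  shows "(\<integral>\<^sup>+\<omega>. ennreal (exp (s * V \<omega> j)) \<partial>MM)
     \<le> (\<integral>\<^sup>+z. ennreal (exp (s / sqrt n * w0 z)) \<partial>\<pi>') * ennreal (exp ((s / sqrt n)\<^sup>2 * b\<^sup>2 / 8)) ^ (n - 1)"
proof -
  define I' where "I' = {..<n} - {j}"
  define c where "c = s / sqrt n"
  have ins: "{..<n} = insert j I'" using j by (auto simp: I'_def)
  have jI: "j \<notin> I'" "finite I'" by (auto simp: I'_def)
  have cardI: "card I' = n - 1" using j by (simp add: I'_def card_Diff_singleton)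
  define f :: "'a \<times> 'b \<Rightarrow> 'a \<times> 'b \<Rightarrow> ennreal" where "f = (\<lambda>y z. ennreal (exp (c * (1 - p (fst z) (snd y)))))"
  have Fm: "(\<lambda>\<omega>. ennreal (exp (s * V \<omega> j))) \<in> borel_measurable (PiM (insert j I') (\<lambda>_. \<pi>'))"
    using V_meas[OF j] unfolding ins[symmetric] by measurable
  have fm: "f y \<in> borel_measurable \<pi>'" if "y \<in> space \<pi>'" for y
  proof -
    have "snd y \<in> space \<beta>" using that by (auto simp: space_pi')
    then have "(\<lambda>z. p (fst z) (snd y)) \<in> borel_measurable \<pi>'"
      using measurable_comp[OF fst_meas p_meas_x] by (simp add: comp_def)
    then show ?thesis unfolding f_def by measurable
  qed
  have eq: "ennreal (exp (s * V (x(j := y)) j)) = ennreal (exp (c * w0 y)) * (\<Prod>i\<in>I'. f y (x i))" for x y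
  proof -
    have "s * V (x(j := y)) j = c * (\<Sum>i\<in>insert j I'. (1 - p (fst ((x(j := y)) i)) (snd y)))"
      unfolding V_def c_def ins by simp
    also have "\<dots> = c * w0 y + (\<Sum>i\<in>I'. c * (1 - p (fst (x i)) (snd y)))"
      using jI by (auto simp: sum_distrib_left w0_def distrib_left intro!: sum.cong)
    finally have "exp (s * V (x(j := y)) j) = exp (c * w0 y) * (\<Prod>i\<in>I'. exp (c * (1 - p (fst (x i)) (snd y))))"
      using jI by (simp add: exp_add exp_sum)
    then show ?thesis
      unfolding f_def by (subst prod_ennreal) (auto simp: ennreal_mult[symmetric] prod_nonneg)
  qed
  have "(\<integral>\<^sup>+\<omega>. ennreal (exp (s * V \<omega> j)) \<partial>MM)
      = (\<integral>\<^sup>+y. (\<integral>\<^sup>+x. ennreal (exp (s * V (x(j := y)) j)) \<partial>PiM I' (\<lambda>_. \<pi>')) \<partial>\<pi>')"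
    unfolding ins by (rule P.product_nn_integral_insert_rev[OF jI(2) jI(1) Fm])
  also have "\<dots> = (\<integral>\<^sup>+y. ennreal (exp (c * w0 y)) * (\<integral>\<^sup>+z. f y z \<partial>\<pi>') ^ (n - 1) \<partial>\<pi>')"
  proof (rule nn_integral_cong)
    fix y assume y: "y \<in> space \<pi>'"
    have "(\<integral>\<^sup>+x. ennreal (exp (s * V (x(j := y)) j)) \<partial>PiM I' (\<lambda>_. \<pi>'))
        = (\<integral>\<^sup>+x. ennreal (exp (c * w0 y)) * (\<Prod>i\<in>I'. f y (x i)) \<partial>PiM I' (\<lambda>_. \<pi>'))"
      by (simp only: eq)
    also have "\<dots> = ennreal (exp (c * w0 y)) * (\<integral>\<^sup>+x. (\<Prod>i\<in>I'. f y (x i)) \<partial>PiM I' (\<lambda>_. \<pi>'))"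
    proof (rule nn_integral_cmult)
      show "(\<lambda>x. \<Prod>i\<in>I'. f y (x i)) \<in> borel_measurable (PiM I' (\<lambda>_. \<pi>'))"
        using fm[OF y] by (intro borel_measurable_prod_ennreal measurable_comp[OF measurable_component_singleton, unfolded comp_def]) auto
    qed
    also have "(\<integral>\<^sup>+x. (\<Prod>i\<in>I'. f y (x i)) \<partial>PiM I' (\<lambda>_. \<pi>')) = (\<Prod>i\<in>I'. (\<integral>\<^sup>+z. f y z \<partial>\<pi>'))"
      using P.product_nn_integral_prod[OF jI(2), of "\<lambda>_. f y"] fm[OF y] by simp
    also have "\<dots> = (\<integral>\<^sup>+z. f y z \<partial>\<pi>') ^ (n - 1)" by (simp add: cardI)
    finally show "(\<integral>\<^sup>+x. ennreal (exp (s * V (x(j := y)) j)) \<partial>PiM I' (\<lambda>_. \<pi>'))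
        = ennreal (exp (c * w0 y)) * (\<integral>\<^sup>+z. f y z \<partial>\<pi>') ^ (n - 1)" .
  qed
  also have "\<dots> \<le> (\<integral>\<^sup>+y. ennreal (exp (c * w0 y)) * ennreal (exp (c\<^sup>2 * b\<^sup>2 / 8)) ^ (n - 1) \<partial>\<pi>')"
  proof (rule nn_integral_mono_AE)
    show "AE y in \<pi>'. ennreal (exp (c * w0 y)) * (\<integral>\<^sup>+z. f y z \<partial>\<pi>') ^ (n - 1)
        \<le> ennreal (exp (c * w0 y)) * ennreal (exp (c\<^sup>2 * b\<^sup>2 / 8)) ^ (n - 1)"
      using AE_good
    proof eventually_elim
      case (elim y)
      have "(\<integral>\<^sup>+z. f y z \<partial>\<pi>') \<le> ennreal (exp (c\<^sup>2 * b\<^sup>2 / 8))"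
        unfolding f_def using hoeff_pi'[of y] elim by blast
      then show ?case by (intro mult_left_mono power_mono) auto
    qed
  qed
  also have "\<dots> = (\<integral>\<^sup>+y. ennreal (exp (c * w0 y)) \<partial>\<pi>') * ennreal (exp (c\<^sup>2 * b\<^sup>2 / 8)) ^ (n - 1)"
    using w0_meas by (intro nn_integral_multc) measurable
  finally show ?thesis unfolding c_def .
qed

end

lemma cosh_real_eq: "cosh (x::real) = (exp x + exp (- x)) / 2"
  unfolding cosh_def by simp

lemma cosh_meas[measurable (raw)]:
  "f \<in> borel_measurable M \<Longrightarrow> (\<lambda>x. cosh (f x :: real)) \<in> borel_measurable M"
  unfolding cosh_real_eq by simp

lemma two_cosh: "2 * cosh (x::real) = exp x + exp (- x)"
  by (simp add: cosh_real_eq)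

lemma ennreal_two_cosh: "ennreal (2 * cosh (x::real)) = ennreal (exp x) + ennreal (exp (- x))"
  unfolding two_cosh by (rule ennreal_plus) auto

lemma cosh_abs_mono: "\<bar>x\<bar> \<le> \<bar>y\<bar> \<Longrightarrow> cosh (x::real) \<le> cosh y"
  using cosh_real_nonneg_le_iff[of "\<bar>x\<bar>" "\<bar>y\<bar>"] by simp
context msetup begin

lemma w_bound: "\<bar>1 - p x y\<bar> \<le> b"
  using p_nonneg[of x y] p_bound[of x y] b_ge_1 unfolding abs_le_iff by linarith

lemma V_bound: "\<bar>V \<omega> j\<bar> \<le> sqrt n * b"
proof -
  have "\<bar>\<Sum>i<n. (1 - p (fst (\<omega> i)) (snd (\<omega> j)))\<bar> \<le> (\<Sum>i<n. \<bar>1 - p (fst (\<omega> i)) (snd (\<omega> j))\<bar>)"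
    by (rule sum_abs)
  also have "\<dots> \<le> (\<Sum>i<n. b)" by (intro sum_mono w_bound)
  also have "\<dots> = real n * b" by simp
  finally have "\<bar>\<Sum>i<n. (1 - p (fst (\<omega> i)) (snd (\<omega> j)))\<bar> / sqrt n \<le> real n * b / sqrt n"
    by (intro divide_right_mono) auto
  then have "\<bar>V \<omega> j\<bar> \<le> real n * b / sqrt n"
    unfolding V_def abs_divide by simp
  also have "real n * b / sqrt n = sqrt n * b"
    using real_div_sqrt[of "real n"] by (metis of_nat_0_le_iff times_divide_eq_right mult.commute)
  finally show ?thesis .
qed

lemma exp_w0_meas: "(\<lambda>z. ennreal (exp (a * w0 z))) \<in> borel_measurable \<pi>'"
  using w0_meas by measurable

lemma MM_prob: "prob_space MM"
  using pi'_prob by (intro prob_space_PiM) auto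

sublocale Q: prob_space MM by (rule MM_prob)

lemma coshV_int: "j < n \<Longrightarrow> integrable MM (\<lambda>\<omega>. cosh (\<theta> * V \<omega> j))"
proof (rule Q.integrable_const_bound[where B="cosh (\<bar>\<theta>\<bar> * (sqrt n * b))"])
  assume j: "j < n"
  show "AE \<omega> in MM. norm (cosh (\<theta> * V \<omega> j)) \<le> cosh (\<bar>\<theta>\<bar> * (sqrt n * b))"
  proof (rule AE_I2)
    fix \<omega>
    have "\<bar>\<theta> * V \<omega> j\<bar> \<le> \<bar>\<bar>\<theta>\<bar> * (sqrt n * b)\<bar>"
      using V_bound[of \<omega> j] b_ge_1 by (simp add: abs_mult mult_left_mono)
    then show "norm (cosh (\<theta> * V \<omega> j)) \<le> cosh (\<bar>\<theta>\<bar> * (sqrt n * b))"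
      using cosh_abs_mono by simp
  qed
  show "(\<lambda>\<omega>. cosh (\<theta> * V \<omega> j)) \<in> borel_measurable MM" using V_meas[OF j] by measurable
qed

lemma cosh_j:
  assumes j: "j < n"
  shows "integral\<^sup>L MM (\<lambda>\<omega>. cosh (\<theta> * V \<omega> j)) \<le> exp (\<theta>\<^sup>2 * b\<^sup>2 / 2)"
proof -
  define c where "c = \<theta> / sqrt n"
  define E where "E = ennreal (exp (c\<^sup>2 * b\<^sup>2 / 8)) ^ (n - 1)"
  define K where "K = (\<lambda>s. (\<integral>\<^sup>+z. ennreal (exp (s / sqrt n * w0 z)) \<partial>\<pi>'))"
  have Vm[measurable]: "(\<lambda>\<omega>. V \<omega> j) \<in> borel_measurable MM" by (rule V_meas[OF j])
  note w0_meas[measurable]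
  have cm[measurable]: "(\<lambda>\<omega>. cosh (\<theta> * V \<omega> j)) \<in> borel_measurable MM"
    by (intro cosh_meas) measurable
  have "(\<integral>\<^sup>+\<omega>. ennreal (2 * cosh (\<theta> * V \<omega> j)) \<partial>MM)
      = (\<integral>\<^sup>+\<omega>. ennreal (exp (\<theta> * V \<omega> j)) + ennreal (exp ((-\<theta>) * V \<omega> j)) \<partial>MM)"
    by (intro nn_integral_cong) (simp only: ennreal_two_cosh mult_minus_left)
  also have "\<dots> = (\<integral>\<^sup>+\<omega>. ennreal (exp (\<theta> * V \<omega> j)) \<partial>MM) + (\<integral>\<^sup>+\<omega>. ennreal (exp ((-\<theta>) * V \<omega> j)) \<partial>MM)"
    by (rule nn_integral_add; measurable)
  also have "\<dots> \<le> K \<theta> * E + K (-\<theta>) * E"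
    unfolding K_def E_def c_def using per_j[OF j, of \<theta>] per_j[OF j, of "-\<theta>"]
    by (intro add_mono) (simp_all add: power2_eq_square)
  also have "\<dots> = (K \<theta> + K (-\<theta>)) * E" by (simp add: distrib_right)
  also have "K \<theta> + K (-\<theta>) = (\<integral>\<^sup>+z. ennreal (2 * cosh (c * w0 z)) \<partial>\<pi>')"
  proof -
    have "K \<theta> + K (-\<theta>) = (\<integral>\<^sup>+z. ennreal (exp (c * w0 z)) + ennreal (exp (- (c * w0 z))) \<partial>\<pi>')"
      unfolding K_def c_def using exp_w0_meas[of "\<theta> / sqrt n"] exp_w0_meas[of "- (\<theta> / sqrt n)"]
      by (subst nn_integral_add) (simp_all add: mult_minus_left[symmetric] del: mult_minus_left)
    also have "\<dots> = (\<integral>\<^sup>+z. ennreal (2 * cosh (c * w0 z)) \<partial>\<pi>')"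
      by (intro nn_integral_cong) (simp only: ennreal_two_cosh mult_minus_left)
    finally show ?thesis .
  qed
  also have "(\<integral>\<^sup>+z. ennreal (2 * cosh (c * w0 z)) \<partial>\<pi>') \<le> (\<integral>\<^sup>+z. ennreal (2 * cosh (c * b)) \<partial>\<pi>')"
  proof (intro nn_integral_mono ennreal_leI)
    fix z
    have "\<bar>c * w0 z\<bar> \<le> \<bar>c * b\<bar>"
      using w_bound[of "fst z" "snd z"] b_ge_1 unfolding w0_def by (simp add: abs_mult mult_left_mono)
    then show "2 * cosh (c * w0 z) \<le> 2 * cosh (c * b)" using cosh_abs_mono by simp
  qed
  also have "\<dots> = ennreal (2 * cosh (c * b))"
    using prob_space.emeasure_space_1[OF pi'_prob] by simp
  finally have le: "(\<integral>\<^sup>+\<omega>. ennreal (2 * cosh (\<theta> * V \<omega> j)) \<partial>MM)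
      \<le> ennreal (2 * cosh (c * b)) * E" by (simp add: mult_right_mono)
  have E_eq: "E = ennreal (exp (c\<^sup>2 * b\<^sup>2 / 8) ^ (n - 1))"
    unfolding E_def by (simp add: ennreal_power)
  have int_eq: "integral\<^sup>L MM (\<lambda>\<omega>. 2 * cosh (\<theta> * V \<omega> j)) = enn2real (\<integral>\<^sup>+\<omega>. ennreal (2 * cosh (\<theta> * V \<omega> j)) \<partial>MM)"
    by (rule integral_eq_nn_integral, rule borel_measurable_times[OF borel_measurable_const cm], simp)
  have "integral\<^sup>L MM (\<lambda>\<omega>. 2 * cosh (\<theta> * V \<omega> j)) \<le> 2 * cosh (c * b) * exp (c\<^sup>2 * b\<^sup>2 / 8) ^ (n - 1)"
    unfolding int_eq
    by (rule enn2real_leI) (use le E_eq in \<open>simp_all add: ennreal_mult\<close>)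
  then have "integral\<^sup>L MM (\<lambda>\<omega>. cosh (\<theta> * V \<omega> j)) \<le> cosh (c * b) * exp (c\<^sup>2 * b\<^sup>2 / 8) ^ (n - 1)"
    by simp
  also have "\<dots> \<le> exp ((c * b)\<^sup>2 / 2) * exp (c\<^sup>2 * b\<^sup>2 / 8) ^ (n - 1)"
    by (intro mult_right_mono cosh_le_exp_sq) simp
  also have "\<dots> = exp (\<theta>\<^sup>2 * b\<^sup>2 * ((real n + 3) / (8 * real n)))"
  proof -
    have "exp (c\<^sup>2 * b\<^sup>2 / 8) ^ (n - 1) = exp (real (n - 1) * (c\<^sup>2 * b\<^sup>2 / 8))"
      by (rule exp_of_nat_mult[symmetric])
    have c2: "c\<^sup>2 = \<theta>\<^sup>2 / real n" unfolding c_def using npos by (simp add: power_divide)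
    have rn: "real (n - 1) = real n - 1" using npos by simp
    have e1: "(c * b)\<^sup>2 / 2 + real (n - 1) * (c\<^sup>2 * b\<^sup>2 / 8) = c\<^sup>2 * b\<^sup>2 * (real n + 3) / 8"
      unfolding rn power_mult_distrib by (simp add: field_simps)
    have e2: "c\<^sup>2 * b\<^sup>2 * (real n + 3) / 8 = \<theta>\<^sup>2 * b\<^sup>2 * ((real n + 3) / (8 * real n))"
      unfolding c2 using npos by simp
    have ex: "(c * b)\<^sup>2 / 2 + real (n - 1) * (c\<^sup>2 * b\<^sup>2 / 8) = \<theta>\<^sup>2 * b\<^sup>2 * ((real n + 3) / (8 * real n))"
      using e1 e2 by simp
    show ?thesis unfolding exp_add[symmetric] \<open>exp (c\<^sup>2 * b\<^sup>2 / 8) ^ (n - 1) = _\<close> ex ..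
  qed
  also have "\<dots> \<le> exp (\<theta>\<^sup>2 * b\<^sup>2 / 2)"
  proof -
    have "(real n + 3) / (8 * real n) \<le> 1 / 2" using npos by (simp add: field_simps)
    then have "\<theta>\<^sup>2 * b\<^sup>2 * ((real n + 3) / (8 * real n)) \<le> \<theta>\<^sup>2 * b\<^sup>2 * (1/2)"
      by (intro mult_left_mono) auto
    then show ?thesis by simp
  qed
  finally show ?thesis .
qed

end

lemma La: assumes "0 < (r::real)" "r \<le> 1/2" shows "1 \<le> (1+r)\<^sup>2 * (1 - r\<^sup>2)"
proof -
  have e: "(1+r)\<^sup>2 * (1 - r\<^sup>2) = 1 + r * (2 - 2 * (r * r) - r * (r * r))"
    by (simp add: power2_eq_square algebra_simps)
  have r2: "r * r \<le> 1/4" using mult_mono[OF assms(2) assms(2)] assms by simp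
  have r3: "r * (r * r) \<le> 1/8" using mult_mono[OF assms(2) r2] assms by simp
  have "0 \<le> r * (2 - 2 * (r * r) - r * (r * r))"
    using r2 r3 assms by (intro mult_nonneg_nonneg) auto
  then show ?thesis unfolding e by simp
qed

lemma Lb: "0 \<le> (y::real) \<Longrightarrow> y < 1 \<Longrightarrow> exp y \<le> 1/(1-y)"
  by (smt (verit, best) exp_minus_ge exp_minus_inverse mult_imp_le_div_pos mult_le_cancel_left_pos)

lemma cosh_ge_quad: "1 + y\<^sup>2 / 2 \<le> cosh (y::real)"
proof -
  have s: "summable (\<lambda>k. y ^ (2*k) / fact (2*k))" using cosh_even_sums sums_summable by blast
  have "(\<Sum>k\<in>{..<2}. y ^ (2*k) / fact (2*k)) \<le> (\<Sum>k. y ^ (2*k) / fact (2*k))"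
    by (rule sum_le_suminf[OF s]) (auto simp: zero_le_even_power)
  also have "\<dots> = cosh y" using cosh_even_sums sums_unique by metis
  finally show ?thesis by (simp add: numeral_2_eq_2)
qed

context msetup begin

definition Zsq :: "(nat \<Rightarrow> 'a \<times> 'b) \<Rightarrow> real" where
  "Zsq \<omega> = (\<Sum>j<n. (V \<omega> j)\<^sup>2) / n"

lemma Zsq_meas[measurable]: "Zsq \<in> borel_measurable MM"
  unfolding Zsq_def by (intro borel_measurable_divide borel_measurable_sum borel_measurable_power V_meas borel_measurable_const) auto

lemma Zsq_nonneg: "0 \<le> Zsq \<omega>"
  unfolding Zsq_def by (intro divide_nonneg_nonneg sum_nonneg) auto

lemma Zsq_bound: "Zsq \<omega> \<le> real n * b\<^sup>2"
proof -
  have "(V \<omega> j)\<^sup>2 \<le> real n * b\<^sup>2" for j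
  proof -
    have "(V \<omega> j)\<^sup>2 = \<bar>V \<omega> j\<bar>\<^sup>2" by simp
    also have "\<dots> \<le> (sqrt n * b)\<^sup>2" by (intro power_mono V_bound) auto
    also have "\<dots> = real n * b\<^sup>2" by (simp add: power_mult_distrib)
    finally show ?thesis .
  qed
  then have "(\<Sum>j<n. (V \<omega> j)\<^sup>2) \<le> (\<Sum>j<n. real n * b\<^sup>2)" by (intro sum_mono)
  then have "(\<Sum>j<n. (V \<omega> j)\<^sup>2) \<le> real n * (real n * b\<^sup>2)" by simp
  then show ?thesis unfolding Zsq_def using npos by (simp add: divide_le_eq mult.commute)
qed

lemma Zsq_int: "integrable MM Zsq"
  by (rule Q.integrable_const_bound[where B="real n * b\<^sup>2"]) (auto simp: Zsq_nonneg Zsq_bound)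

lemma coshZ_meas: "(\<lambda>\<omega>. cosh (\<theta> * sqrt (Zsq \<omega>))) \<in> borel_measurable MM"
  by (intro cosh_meas) measurable

lemma coshZ:
  shows "integrable MM (\<lambda>\<omega>. cosh (\<theta> * sqrt (Zsq \<omega>)))"
    and "integral\<^sup>L MM (\<lambda>\<omega>. cosh (\<theta> * sqrt (Zsq \<omega>))) \<le> exp (\<theta>\<^sup>2 * b\<^sup>2 / 2)"
proof -
  define R where "R = (\<lambda>\<omega>. (\<Sum>j<n. cosh (\<theta> * V \<omega> j)) / real n)"
  have pw: "cosh (\<theta> * sqrt (Zsq \<omega>)) \<le> R \<omega>" for \<omega>
    using cosh_jensen[of "{..<n}" \<theta> "V \<omega>"] npos unfolding Zsq_def R_def by auto
  have Rint: "integrable MM R"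
    unfolding R_def by (intro integrable_divide_zero Bochner_Integration.integrable_sum coshV_int) auto
  show int: "integrable MM (\<lambda>\<omega>. cosh (\<theta> * sqrt (Zsq \<omega>)))"
  proof (rule Bochner_Integration.integrable_bound[OF Rint coshZ_meas])
    show "AE x in MM. norm (cosh (\<theta> * sqrt (Zsq x))) \<le> norm (R x)"
      using pw by (intro AE_I2) (metis abs_of_pos cosh_real_pos order_less_le_trans real_norm_def)
  qed
  have "integral\<^sup>L MM (\<lambda>\<omega>. cosh (\<theta> * sqrt (Zsq \<omega>))) \<le> integral\<^sup>L MM R"
    by (rule integral_mono[OF int Rint pw])
  also have "integral\<^sup>L MM R = (\<Sum>j<n. integral\<^sup>L MM (\<lambda>\<omega>. cosh (\<theta> * V \<omega> j))) / real n"
    unfolding R_def by (simp add: Bochner_Integration.integral_sum coshV_int)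
  also have "\<dots> \<le> (\<Sum>j<n. exp (\<theta>\<^sup>2 * b\<^sup>2 / 2)) / real n"
    by (intro divide_right_mono sum_mono cosh_j) auto
  also have "\<dots> = exp (\<theta>\<^sup>2 * b\<^sup>2 / 2)" using npos by simp
  finally show "integral\<^sup>L MM (\<lambda>\<omega>. cosh (\<theta> * sqrt (Zsq \<omega>))) \<le> exp (\<theta>\<^sup>2 * b\<^sup>2 / 2)" .
qed

end

context msetup begin

lemma EZ_theta:
  assumes th: "\<theta> \<noteq> 0"
  shows "integral\<^sup>L MM Zsq \<le> 2 * (exp (\<theta>\<^sup>2 * b\<^sup>2 / 2) - 1) / \<theta>\<^sup>2"
proof -
  have t2: "\<theta>\<^sup>2 > 0" using th by simp
  have pw: "Zsq \<omega> \<le> 2 * (cosh (\<theta> * sqrt (Zsq \<omega>)) - 1) / \<theta>\<^sup>2" for \<omega>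
  proof -
    have "1 + (\<theta> * sqrt (Zsq \<omega>))\<^sup>2 / 2 \<le> cosh (\<theta> * sqrt (Zsq \<omega>))" by (rule cosh_ge_quad)
    moreover have "(\<theta> * sqrt (Zsq \<omega>))\<^sup>2 = \<theta>\<^sup>2 * Zsq \<omega>"
      using Zsq_nonneg by (simp add: power_mult_distrib)
    ultimately have "\<theta>\<^sup>2 * Zsq \<omega> \<le> 2 * (cosh (\<theta> * sqrt (Zsq \<omega>)) - 1)" by simp
    then show ?thesis using t2 by (simp add: le_divide_eq mult.commute)
  qed
  have ci: "integrable MM (\<lambda>\<omega>. 2 * (cosh (\<theta> * sqrt (Zsq \<omega>)) - 1) / \<theta>\<^sup>2)"
    using coshZ(1) by (intro integrable_divide_zero integrable_mult_right Bochner_Integration.integrable_diff) auto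
  have "integral\<^sup>L MM Zsq \<le> integral\<^sup>L MM (\<lambda>\<omega>. 2 * (cosh (\<theta> * sqrt (Zsq \<omega>)) - 1) / \<theta>\<^sup>2)"
    by (rule integral_mono[OF Zsq_int ci pw])
  also have "\<dots> = 2 * (integral\<^sup>L MM (\<lambda>\<omega>. cosh (\<theta> * sqrt (Zsq \<omega>))) - 1) / \<theta>\<^sup>2"
    using coshZ(1) by (simp add: Bochner_Integration.integral_diff Q.prob_space)
  also have "\<dots> \<le> 2 * (exp (\<theta>\<^sup>2 * b\<^sup>2 / 2) - 1) / \<theta>\<^sup>2"
    using coshZ(2) t2 by (intro divide_right_mono mult_left_mono) auto
  finally show ?thesis .
qed

lemma EZ: "integral\<^sup>L MM Zsq \<le> (b + 1)\<^sup>2"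
proof -
  have b1: "b \<ge> 1" by (rule b_ge_1)
  define x where "x = 1 / (b + 1)"
  define \<theta> where "\<theta> = sqrt (2 * x) / b"
  have x0: "0 < x" "x \<le> 1/2" using b1 by (auto simp: x_def field_simps)
  have th2: "\<theta>\<^sup>2 = 2 * x / b\<^sup>2" using x0 by (simp add: \<theta>_def power_divide)
  have th0: "\<theta> \<noteq> 0" using x0 b1 by (simp add: \<theta>_def)
  have ex: "\<theta>\<^sup>2 * b\<^sup>2 / 2 = x" using b1 th2 by simp
  have "integral\<^sup>L MM Zsq \<le> 2 * (exp x - 1) / \<theta>\<^sup>2" using EZ_theta[OF th0] ex by simp
  also have "\<dots> = b\<^sup>2 * (exp x - 1) / x" unfolding th2 using x0 b1 by (simp add: field_simps)
  also have "\<dots> \<le> b\<^sup>2 * (x / (1 - x)) / x"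
  proof -
    have "exp x \<le> 1 / (1 - x)" using Lb[of x] x0 by simp
    then have "exp x - 1 \<le> x / (1 - x)" using x0 by (simp add: field_simps)
    then show ?thesis using x0 by (intro divide_right_mono mult_left_mono) auto
  qed
  also have "\<dots> = b\<^sup>2 / (1 - x)" using x0 by simp
  also have "\<dots> = b * (b + 1)" using b1 by (simp add: x_def field_simps power2_eq_square)
  also have "\<dots> \<le> (b + 1)\<^sup>2" using b1 by (simp add: power2_eq_square)
  finally show ?thesis .
qed

lemma marg_eq: "marg_stat p n \<omega> = Zsq \<omega> / n"
proof -
  have t: "(1 - (1 / real n) * (\<Sum>i<n. p (fst (\<omega> i)) (snd (\<omega> j))))\<^sup>2 = (V \<omega> j)\<^sup>2 / n" for j
  proof -
    define S where "S = (\<Sum>i<n. p (fst (\<omega> i)) (snd (\<omega> j)))"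
    define N where "N = real n"
    have N0: "N > 0" using npos by (simp add: N_def)
    have "(\<Sum>i<n. (1 - p (fst (\<omega> i)) (snd (\<omega> j)))) = N - S"
      by (simp add: sum_subtractf S_def N_def)
    then have V2: "(V \<omega> j)\<^sup>2 = (N - S)\<^sup>2 / N"
      unfolding V_def N_def[symmetric] using N0 by (simp add: power_divide)
    have "1 - (1 / N) * S = (N - S) / N" using N0 by (simp add: field_simps)
    then have "(1 - (1 / N) * S)\<^sup>2 = (N - S)\<^sup>2 / N / N"
      by (simp add: power_divide power2_eq_square)
    then show ?thesis using V2 unfolding S_def N_def by simp
  qed
  show ?thesis unfolding marg_stat_def Zsq_def t
    by (simp add: sum_divide_distrib)
qed

end

context msetup begin

lemma markov:
  assumes B: "B \<in> sets MM" and h: "integrable MM h" and le: "\<And>\<omega>. \<omega> \<in> space MM \<Longrightarrow> indicator B \<omega> \<le> h \<omega>"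
  shows "measure MM B \<le> integral\<^sup>L MM h"
proof -
  have "measure MM B = integral\<^sup>L MM (indicator B :: _ \<Rightarrow> real)"
    using sets.sets_into_space[OF B] by (simp add: Int_absorb2)
  also have "\<dots> \<le> integral\<^sup>L MM h"
    by (rule integral_mono[OF integrable_real_indicator[OF B] h le]) (simp add: Q.emeasure_finite less_top[symmetric])
  finally show ?thesis .
qed

lemma tail:
  assumes t: "t > 0"
  shows "measure MM {\<omega> \<in> space MM. (t + b + 1)\<^sup>2 < Zsq \<omega>} \<le> exp (- t\<^sup>2 / (4 * b\<^sup>2))"
proof -
  have b1: "b \<ge> 1" by (rule b_ge_1)
  define z where "z = t + b + 1"
  have z0: "z > 0" using t b1 by (simp add: z_def)
  define B where "B = {\<omega> \<in> space MM. z\<^sup>2 < Zsq \<omega>}"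
  have Bs: "B \<in> sets MM" unfolding B_def by measurable
  show ?thesis unfolding z_def[symmetric] B_def[symmetric]
  proof (cases "t \<le> (b + 1) / 2")
    case True
    define h where "h = (\<lambda>\<omega>. Zsq \<omega> / z\<^sup>2)"
    have hi: "integrable MM h" unfolding h_def using Zsq_int by (rule integrable_divide_zero)
    have "measure MM B \<le> integral\<^sup>L MM h"
    proof (rule markov[OF Bs hi])
      fix \<omega> assume "\<omega> \<in> space MM"
      show "indicator B \<omega> \<le> h \<omega>"
        unfolding h_def B_def indicator_def using z0 Zsq_nonneg[of \<omega>]
        by (auto simp: divide_nonneg_pos le_divide_eq)
    qed
    also have "integral\<^sup>L MM h = integral\<^sup>L MM Zsq / z\<^sup>2" unfolding h_def by simp
    also have "\<dots> \<le> (b + 1)\<^sup>2 / z\<^sup>2" using EZ z0 by (intro divide_right_mono) auto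
    also have "\<dots> \<le> exp (- t\<^sup>2 / (4 * b\<^sup>2))"
    proof -
      define r where "r = t / (b + 1)"
      have r0: "0 < r" "r \<le> 1/2" using t b1 True by (auto simp: r_def field_simps)
      have zr: "z = (b + 1) * (1 + r)" using b1 by (simp add: z_def r_def field_simps)
      have q: "(b + 1)\<^sup>2 / z\<^sup>2 = 1 / (1 + r)\<^sup>2" using b1 r0 unfolding zr by (simp add: power_mult_distrib)
      have r2: "r\<^sup>2 < 1" using mult_mono[OF r0(2) r0(2)] r0 by (simp add: power2_eq_square)
      have "exp (r\<^sup>2) \<le> 1 / (1 - r\<^sup>2)" using Lb[of "r\<^sup>2"] r2 by simp
      also have "\<dots> \<le> (1 + r)\<^sup>2" using La[OF r0] r2 by (simp add: divide_le_eq)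
      finally have er: "exp (r\<^sup>2) \<le> (1 + r)\<^sup>2" .
      have "1 / (1 + r)\<^sup>2 \<le> exp (- r\<^sup>2)"
        using er r0 by (simp add: exp_minus divide_simps)
      also have "\<dots> \<le> exp (- t\<^sup>2 / (4 * b\<^sup>2))"
      proof -
        have "t / (2 * b) \<le> r" unfolding r_def using t b1 by (intro divide_left_mono) auto
        then have "(t / (2 * b))\<^sup>2 \<le> r\<^sup>2" using t b1 by (intro power_mono) auto
        then have "t\<^sup>2 / (4 * b\<^sup>2) \<le> r\<^sup>2" by (simp add: power_divide power_mult_distrib)
        then show ?thesis by simp
      qed
      finally show ?thesis unfolding q .
    qed
    finally show "measure MM B \<le> exp (- t\<^sup>2 / (4 * b\<^sup>2))" .
  next
    case False
    then have tb: "t > (b + 1) / 2" by simp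
    define \<theta> where "\<theta> = z / b\<^sup>2"
    have th0: "\<theta> > 0" using z0 b1 by (simp add: \<theta>_def)
    define h where "h = (\<lambda>\<omega>. cosh (\<theta> * sqrt (Zsq \<omega>)) / cosh (\<theta> * z))"
    have hi: "integrable MM h" unfolding h_def using coshZ(1) by (rule integrable_divide_zero)
    have "measure MM B \<le> integral\<^sup>L MM h"
    proof (rule markov[OF Bs hi])
      fix \<omega> assume "\<omega> \<in> space MM"
      show "indicator B \<omega> \<le> h \<omega>"
      proof (cases "\<omega> \<in> B")
        case True
        then have "z\<^sup>2 < Zsq \<omega>" by (simp add: B_def)
        then have "z < sqrt (Zsq \<omega>)" using z0 real_less_rsqrt by blast
        then have "\<theta> * z \<le> \<theta> * sqrt (Zsq \<omega>)" using th0 by simp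
        then have "cosh (\<theta> * z) \<le> cosh (\<theta> * sqrt (Zsq \<omega>))"
          using th0 z0 Zsq_nonneg[of \<omega>] by (subst cosh_real_nonneg_le_iff) (auto intro!: mult_nonneg_nonneg)
        then show ?thesis using True by (simp add: h_def)
      next
        case False
        then show ?thesis by (simp add: h_def)
      qed
    qed
    also have "integral\<^sup>L MM h = integral\<^sup>L MM (\<lambda>\<omega>. cosh (\<theta> * sqrt (Zsq \<omega>))) / cosh (\<theta> * z)"
      unfolding h_def by simp
    also have "\<dots> \<le> exp (\<theta>\<^sup>2 * b\<^sup>2 / 2) / cosh (\<theta> * z)"
      using coshZ(2) by (intro divide_right_mono) auto
    also have "\<dots> \<le> exp (\<theta>\<^sup>2 * b\<^sup>2 / 2) / (exp (\<theta> * z) / 2)"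
    proof -
      have "exp (\<theta> * z) / 2 \<le> cosh (\<theta> * z)" unfolding cosh_real_eq
        by (simp add: divide_right_mono)
      then show ?thesis by (intro divide_left_mono) auto
    qed
    also have "\<dots> = 2 * exp (\<theta>\<^sup>2 * b\<^sup>2 / 2 - \<theta> * z)" by (simp add: exp_diff)
    also have "\<theta>\<^sup>2 * b\<^sup>2 / 2 - \<theta> * z = - (z\<^sup>2 / (2 * b\<^sup>2))"
      using b1 unfolding \<theta>_def by (simp add: power_divide field_simps power2_eq_square)
    also have "2 * exp (- (z\<^sup>2 / (2 * b\<^sup>2))) \<le> exp 1 * exp (- (z\<^sup>2 / (2 * b\<^sup>2)))"
      using exp_ge_add_one_self[of 1] by (intro mult_right_mono) auto
    also have "\<dots> = exp (1 - z\<^sup>2 / (2 * b\<^sup>2))" by (simp add: exp_add[symmetric])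
    also have "\<dots> \<le> exp (- t\<^sup>2 / (4 * b\<^sup>2))"
    proof -
      have "4 * b\<^sup>2 \<le> 2 * z\<^sup>2 - t\<^sup>2"
      proof -
        have "2 * z\<^sup>2 - t\<^sup>2 = t\<^sup>2 + 4 * t * (b + 1) + 2 * (b + 1)\<^sup>2"
          by (simp add: z_def power2_eq_square algebra_simps)
        moreover have "4 * t * (b + 1) \<ge> 2 * (b + 1)\<^sup>2"
          using tb b1 by (simp add: power2_eq_square)
        moreover have "(b + 1)\<^sup>2 \<ge> b\<^sup>2" using b1 by (intro power_mono) auto
        ultimately show ?thesis by (smt (verit) zero_le_power2)
      qed
      then have A: "4 * b\<^sup>2 - 2 * z\<^sup>2 \<le> - t\<^sup>2" by simp
      have bb: "b\<^sup>2 > 0" using b1 by simp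
      have "1 - z\<^sup>2 / (2 * b\<^sup>2) = (4 * b\<^sup>2 - 2 * z\<^sup>2) / (4 * b\<^sup>2)"
        using bb by (simp add: field_simps)
      also have "\<dots> \<le> (- t\<^sup>2) / (4 * b\<^sup>2)"
        using A bb by (intro divide_right_mono) auto
      finally have "1 - z\<^sup>2 / (2 * b\<^sup>2) \<le> - t\<^sup>2 / (4 * b\<^sup>2)" by simp
      then show ?thesis by simp
    qed
    finally show "measure MM B \<le> exp (- t\<^sup>2 / (4 * b\<^sup>2))" .
  qed
qed

end

theorem proposition8:
  fixes \<alpha> :: "'a measure" and \<beta> :: "'b measure" and \<pi> \<pi>' :: "('a \<times> 'b) measure"
    and p :: "'a \<Rightarrow> 'b \<Rightarrow> real" and b :: real and n :: nat
  assumes "prob_space \<alpha>" and "prob_space \<beta>"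
    and "coupling \<alpha> \<beta> \<pi>"
    and p_meas: "(\<lambda>z. p (fst z) (snd z)) \<in> borel_measurable (\<alpha> \<Otimes>\<^sub>M \<beta>)"
    and p_nonneg: "\<And>x y. 0 \<le> p x y"
    and p_bound: "\<And>x y. p x y \<le> b"
    and dens: "\<pi> = density (\<alpha> \<Otimes>\<^sub>M \<beta>) (\<lambda>z. ennreal (p (fst z) (snd z)))"
    and "coupling \<alpha> \<beta> \<pi>'"
    and "n > 0"
  shows "(\<integral>\<omega>. marg_stat p n \<omega> \<partial>(\<Pi>\<^sub>M i\<in>{..<n}. \<pi>')) \<le> (b + 1)\<^sup>2 / real n
    \<and> (\<forall>t>0.
      measure (\<Pi>\<^sub>M i\<in>{..<n}. \<pi>')
        {\<omega> \<in> space (\<Pi>\<^sub>M i\<in>{..<n}. \<pi>'). marg_stat p n \<omega> \<le> (t + b + 1)\<^sup>2 / real n}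
      \<ge> 1 - exp (- t\<^sup>2 / (4 * b\<^sup>2)))"
proof -
  interpret msetup \<alpha> \<beta> \<pi> \<pi>' p b n
    using assms by (simp add: msetup_def)
  have n0: "real n > 0" using npos by simp
  have part1: "(\<integral>\<omega>. marg_stat p n \<omega> \<partial>MM) \<le> (b + 1)\<^sup>2 / real n"
  proof -
    have "(\<integral>\<omega>. marg_stat p n \<omega> \<partial>MM) = (\<integral>\<omega>. Zsq \<omega> / real n \<partial>MM)"
      by (simp add: marg_eq)
    also have "\<dots> = integral\<^sup>L MM Zsq / real n" by simp
    also have "\<dots> \<le> (b + 1)\<^sup>2 / real n" using EZ n0 by (intro divide_right_mono) auto
    finally show ?thesis .
  qed
  have part2: "measure MM {\<omega> \<in> space MM. marg_stat p n \<omega> \<le> (t + b + 1)\<^sup>2 / real n}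
      \<ge> 1 - exp (- t\<^sup>2 / (4 * b\<^sup>2))" if t: "t > 0" for t
  proof -
    define B where "B = {\<omega> \<in> space MM. (t + b + 1)\<^sup>2 < Zsq \<omega>}"
    have Bs: "B \<in> sets MM" unfolding B_def by measurable
    have eq: "{\<omega> \<in> space MM. marg_stat p n \<omega> \<le> (t + b + 1)\<^sup>2 / real n} = space MM - B"
      unfolding B_def marg_eq using n0 by (auto simp: divide_le_cancel not_less)
    have "measure MM (space MM - B) = 1 - measure MM B" using Bs by (rule Q.prob_compl)
    moreover have "measure MM B \<le> exp (- t\<^sup>2 / (4 * b\<^sup>2))" unfolding B_def by (rule tail[OF t])
    ultimately show ?thesis unfolding eq by simp
  qed
  show ?thesis using part1 part2 by blast
qed

end
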